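(* Let $I=\{1,2\}$, $A=\{x,y,z\}$ with $x,y,z$ pairwise distinct, and let $\mathcal C=\mathcal C(I,A,(\rho_i)_{i\in I},(C^a)_{a\in A})$ be a Cartan scheme with $\rho_1(x)=y$, $\rho_1(y)=x$, $\rho_1(z)=z$, $\rho_2(x)=x$, $\rho_2(y)=z$, $\rho_2(z)=y$. Let $a,b,c,d\in\mathbb N_0$ with $a\le d$ such that $C^x=\begin{pmatrix}2&-a\\-c&2\end{pmatrix}$, $C^y=\begin{pmatrix}2&-a\\-d&2\end{pmatrix}$, $C^z=\begin{pmatrix}2&-b\\-d&2\end{pmatrix}$, and let $\mathcal R=\mathcal R(\mathcal C,(R^a)_{a\in A})$ be a root system of type $\mathcal C$. If $\mathcal R$ is finite, then $(a,b,c,d)$ and $R^x$ satisfy one of: (1) $(a,b,c,d)=(1,1,1,1)$, $|R^x_+|=3$; (2) $(1,1,3,3)$, $|R^x_+|=6$; (3) $(1,2,4,2)$, $|R^x_+|=6$; (4) $(1,3,6,2)$, $|R^x_+|=12$; (5) $(1,4,5,2)$, $|R^x_+|=12$; (6) $(1,3,7,2)$, $|R^x_+|=18$; (7) $(1,5,5,2)$, $|R^x_+|=18$. Conversely, if $(a,b,c,d)$ is one of these seven quadruples, then $\mathcal R$ is finite.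
   Context: Let $I$ be a nonempty finite set and $\{\alpha_i\mid i\in I\}$ the standard basis of $\mathbb Z^I$; $\mathbb N_0=\{0,1,2,\dots\}$. A generalized Cartan matrix is $C=(c_{ij})_{i,j\in I}\in\mathbb Z^{I\times I}$ with $c_{ii}=2$, $c_{jk}\le0$ for $j\ne k$, and $c_{ij}=0\Rightarrow c_{ji}=0$. A Cartan scheme $\mathcal C=\mathcal C(I,A,(\rho_i)_{i\in I},(C^a)_{a\in A})$ consists of a nonempty set $A$, maps $\rho_i:A\to A$ and generalized Cartan matrices $C^a=(c^a_{jk})_{j,k\in I}$ such that (C1) $\rho_i^2=\mathrm{id}$ and (C2) $c^a_{ij}=c^{\rho_i(a)}_{ij}$ for all $a\in A$, $i,j\in I$. For $i\in I$, $a\in A$ let $\sigma_i^a\in\mathrm{Aut}(\mathbb Z^I)$, $\sigma_i^a(\alpha_j)=\alpha_j-c^a_{ij}\alpha_i$. A root system of type $\mathcal C$ is a family $\mathcal R=\mathcal R(\mathcal C,(R^a)_{a\in A})$ of subsets $R^a\subset\mathbb Z^I$ such that, writing $R^a_+=R^a\cap\mathbb N_0^I$ and $m^a_{i,j}=|R^a\cap(\mathbb N_0\alpha_i+\mathbb N_0\alpha_j)|$, for all $a\in A$, $i,j\in I$: (R1) $R^a=R^a_+\cup(-R^a_+)$; (R2) $R^a\cap\mathbb Z\alpha_i=\{\alpha_i,-\alpha_i\}$; (R3) $\sigma_i^a(R^a)=R^{\rho_i(a)}$; (R4) if $i\neq j$ and $m^a_{i,j}$ is finite then $(\rho_i\rho_j)^{m^a_{i,j}}(a)=a$.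 It is finite if every $R^a$ is finite. *)

theory Defs
  imports Main
begin

definition zvec :: "'i set \<Rightarrow> ('i \<Rightarrow> int) set" where
  "zvec I = {v. \<forall>k. k \<notin> I \<longrightarrow> v k = 0}"

definition nvec :: "'i set \<Rightarrow> ('i \<Rightarrow> int) set" where
  "nvec I = {v \<in> zvec I. \<forall>k\<in>I. 0 \<le> v k}"

definition alpha :: "'i \<Rightarrow> 'i \<Rightarrow> int" where
  "alpha i = (\<lambda>k. if k = i then 1 else 0)"

definition gcm :: "'i set \<Rightarrow> ('i \<Rightarrow> 'i \<Rightarrow> int) \<Rightarrow> bool" where
  "gcm I M \<longleftrightarrow> (\<forall>i\<in>I. M i i = 2) \<and> (\<forall>j\<in>I. \<forall>k\<in>I. j \<noteq> k \<longrightarrow> M j k \<le> 0)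
     \<and> (\<forall>i\<in>I. \<forall>j\<in>I. M i j = 0 \<longrightarrow> M j i = 0)"

text \<open>Cartan scheme: C a i j is the entry c^a_{ij}.\<close>
definition cartan_scheme ::
  "'i set \<Rightarrow> 'a set \<Rightarrow> ('i \<Rightarrow> 'a \<Rightarrow> 'a) \<Rightarrow> ('a \<Rightarrow> 'i \<Rightarrow> 'i \<Rightarrow> int) \<Rightarrow> bool" where
  "cartan_scheme I A rho C \<longleftrightarrow> finite I \<and> I \<noteq> {} \<and> A \<noteq> {}
     \<and> (\<forall>i\<in>I. \<forall>a\<in>A. rho i a \<in> A \<and> rho i (rho i a) = a)
     \<and> (\<forall>a\<in>A. gcm I (C a))
     \<and> (\<forall>a\<in>A. \<forall>i\<in>I. \<forall>j\<in>I. C a i j = C (rho i a) i j)"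

text \<open>sigma_i^a, the linear map with alpha_j |-> alpha_j - c^a_{ij} alpha_i.\<close>
definition sigma :: "'i set \<Rightarrow> ('a \<Rightarrow> 'i \<Rightarrow> 'i \<Rightarrow> int) \<Rightarrow> 'i \<Rightarrow> 'a \<Rightarrow> ('i \<Rightarrow> int) \<Rightarrow> ('i \<Rightarrow> int)" where
  "sigma I C i a v = (\<lambda>k. v k - (\<Sum>j\<in>I. v j * C a i j) * alpha i k)"

definition pos_roots :: "'i set \<Rightarrow> ('i \<Rightarrow> int) set \<Rightarrow> ('i \<Rightarrow> int) set" where
  "pos_roots I S = S \<inter> nvec I"

definition span2 :: "'i \<Rightarrow> 'i \<Rightarrow> ('i \<Rightarrow> int) set" where
  "span2 i j = {v. \<exists>s t. 0 \<le> s \<and> 0 \<le> t \<and> v = (\<lambda>k. s * alpha i k + t * alpha j k)}"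

definition root_system ::
  "'i set \<Rightarrow> 'a set \<Rightarrow> ('i \<Rightarrow> 'a \<Rightarrow> 'a) \<Rightarrow> ('a \<Rightarrow> 'i \<Rightarrow> 'i \<Rightarrow> int)
    \<Rightarrow> ('a \<Rightarrow> ('i \<Rightarrow> int) set) \<Rightarrow> bool" where
  "root_system I A rho C R \<longleftrightarrow> cartan_scheme I A rho C
     \<and> (\<forall>a\<in>A. R a \<subseteq> zvec I)
     \<and> (\<forall>a\<in>A. R a = pos_roots I (R a) \<union> (\<lambda>v k. - v k) ` pos_roots I (R a))
     \<and> (\<forall>a\<in>A. \<forall>i\<in>I. R a \<inter> {(\<lambda>k. n * alpha i k) | n. True} = {alpha i, (\<lambda>k. - alpha i k)})
     \<and> (\<forall>a\<in>A. \<forall>i\<in>I. sigma I C i a ` R a = R (rho i a))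
     \<and> (\<forall>a\<in>A. \<forall>i\<in>I. \<forall>j\<in>I. i \<noteq> j \<longrightarrow> finite (R a \<inter> span2 i j)
          \<longrightarrow> ((rho i \<circ> rho j) ^^ card (R a \<inter> span2 i j)) a = a)"

definition finite_root_system :: "'a set \<Rightarrow> ('a \<Rightarrow> ('i \<Rightarrow> int) set) \<Rightarrow> bool" where
  "finite_root_system A R \<longleftrightarrow> (\<forall>a\<in>A. finite (R a))"

end

theory Submission
  imports Defs
begin


type_synonym v2 = "int \<times> int"

definition det2 :: "v2 \<Rightarrow> v2 \<Rightarrow> int" where "det2 u w = fst u * snd w - snd u * fst w"
definition Q1 :: "v2 \<Rightarrow> bool" where "Q1 u \<longleftrightarrow> fst u \<ge> 0 \<and> snd u \<ge> 0 \<and> u \<noteq> (0,0)"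
definition sgc :: "v2 \<Rightarrow> bool" where "sgc u \<longleftrightarrow> (fst u \<ge> 0 \<and> snd u \<ge> 0) \<or> (fst u \<le> 0 \<and> snd u \<le> 0)"
definition lc :: "int \<Rightarrow> v2 \<Rightarrow> int \<Rightarrow> v2 \<Rightarrow> v2" where
  "lc l u m w = (l * fst u + m * fst w, l * snd u + m * snd w)"
definition sm :: "int \<Rightarrow> v2 \<Rightarrow> v2" where "sm l u = (l * fst u, l * snd u)"

type_synonym m2 = "int \<times> int \<times> int \<times> int"
fun app :: "m2 \<Rightarrow> v2 \<Rightarrow> v2" where "app (a,b,c,d) (s,t) = (a*s+b*t, c*s+d*t)"
fun mmul :: "m2 \<Rightarrow> m2 \<Rightarrow> m2" where
  "mmul (a,b,c,d) (e,f,g,h) = (a*e+b*g, a*f+b*h, c*e+d*g, c*f+d*h)"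
fun mdet :: "m2 \<Rightarrow> int" where "mdet (a,b,c,d) = a*d - b*c"
definition Fm :: "nat \<Rightarrow> int \<Rightarrow> m2" where "Fm k q = (if odd k then (-1,q,0,1) else (1,0,q,-1))"
primrec Gm :: "(nat \<Rightarrow> int) \<Rightarrow> nat \<Rightarrow> m2" where
  "Gm q 0 = (1,0,0,1)" | "Gm q (Suc k) = mmul (Fm (Suc k) (q (Suc k))) (Gm q k)"
primrec vp :: "(nat \<Rightarrow> int) \<Rightarrow> nat \<Rightarrow> v2 \<times> v2" where
  "vp q 0 = ((0,-1),(1,0))"
| "vp q (Suc k) = (snd (vp q k), lc (q (Suc k)) (snd (vp q k)) (-1) (fst (vp q k)))"
definition vs :: "(nat \<Rightarrow> int) \<Rightarrow> nat \<Rightarrow> v2" where "vs q k = fst (vp q k)"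
definition ee :: "nat \<Rightarrow> v2" where "ee k = (if odd k then (1,0) else (0,1))"

lemma vs_Suc: "vs q (Suc k) = snd (vp q k)"
  by (simp add: vs_def)
lemma vs_0: "vs q 0 = (0,-1)" and vs_1: "vs q 1 = (1,0)"
  by (simp_all add: vs_def)
lemma vs_Suc0 [simp]: "vs q (Suc 0) = (1,0)"
  by (simp add: vs_def)
lemma vs_rec: "vs q (Suc (Suc k)) = lc (q (Suc k)) (vs q (Suc k)) (-1) (vs q k)"
  by (simp add: vs_def)

lemma app_mmul: "app (mmul M N) u = app M (app N u)"
  by (cases M; cases N; cases u) (simp add: algebra_simps)
lemma app_lc: "app M (lc l u m w) = lc l (app M u) m (app M w)"
  by (cases M; cases u; cases w) (simp add: lc_def algebra_simps)
lemma app_sm: "app M (sm l u) = sm l (app M u)"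
  by (cases M; cases u) (simp add: sm_def algebra_simps)
lemma mdet_mmul: "mdet (mmul M N) = mdet M * mdet N"
  by (cases M; cases N) (simp add: algebra_simps)
lemma mdet_Fm: "mdet (Fm k q) = -1"
  by (simp add: Fm_def)
lemma mdet_Gm: "mdet (Gm q k) = 1 \<or> mdet (Gm q k) = -1"
  by (induction k) (auto simp: mdet_mmul mdet_Fm)

lemma app_inj:
  assumes "mdet M \<noteq> 0" "app M u = app M w" shows "u = w"
proof -
  obtain a b c d where M: "M = (a,b,c,d)" by (cases M) auto
  obtain s t where u: "u = (s,t)" by (cases u) auto
  obtain s' t' where w: "w = (s',t')" by (cases w) auto
  have e1: "a*(s-s') + b*(t-t') = 0" and e2: "c*(s-s') + d*(t-t') = 0"
    using assms(2) by (simp_all add: M u w algebra_simps)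
  have "(a*d-b*c)*(s-s') = d*(a*(s-s') + b*(t-t')) - b*(c*(s-s') + d*(t-t'))"
    by (simp add: algebra_simps)
  then have "(a*d-b*c)*(s-s') = 0" using e1 e2 by simp
  then have "s = s'" using assms(1) M by simp
  have "(a*d-b*c)*(t-t') = a*(c*(s-s') + d*(t-t')) - c*(a*(s-s') + b*(t-t'))"
    by (simp add: algebra_simps)
  then have "(a*d-b*c)*(t-t') = 0" using e1 e2 by simp
  then have "t = t'" using assms(1) M by simp
  show ?thesis using \<open>s = s'\<close> \<open>t = t'\<close> u w by simp
qed

lemma Gm_inj: "app (Gm q k) u = app (Gm q k) w \<Longrightarrow> u = w"
  using app_inj mdet_Gm by (metis one_neq_neg_one zero_neq_neg_one zero_neq_one)

lemma G_v: "app (Gm q k) (vs q k) = sm (-1) (ee k) \<and> app (Gm q k) (vs q (Suc k)) = ee (Suc k)"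
proof (induction k)
  case 0
  then show ?case by (simp add: vs_def ee_def sm_def)
next
  case (Suc k)
  have h1: "app (Gm q (Suc k)) (vs q (Suc k)) = app (Fm (Suc k) (q (Suc k))) (ee (Suc k))"
    using Suc by (simp add: app_mmul)
  have h2: "app (Gm q (Suc k)) (vs q (Suc (Suc k))) =
     app (Fm (Suc k) (q (Suc k))) (lc (q (Suc k)) (ee (Suc k)) (-1) (sm (-1) (ee k)))"
    using Suc by (simp add: app_mmul vs_rec app_lc)
  show ?case unfolding h1 h2
    by (cases "odd k") (auto simp: Fm_def ee_def sm_def lc_def)
qed

lemma det_v: "det2 (vs q k) (vs q (Suc k)) = 1"
proof (induction k)
  case 0
  then show ?case by (simp add: vs_def det2_def)
next
  case (Suc k)
  then show ?case by (simp add: vs_rec det2_def lc_def algebra_simps)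
qed



lemma ccw_trans:
  assumes "Q1 u" "Q1 w" "Q1 z" "det2 u w > 0" "det2 w z > 0" shows "det2 u z > 0"
proof -
  obtain u1 u2 where u: "u = (u1,u2)" by (cases u)
  obtain w1 w2 where w: "w = (w1,w2)" by (cases w)
  obtain z1 z2 where z: "z = (z1,z2)" by (cases z)
  have nn: "u1 \<ge> 0" "u2 \<ge> 0" "w1 \<ge> 0" "w2 \<ge> 0" "z1 \<ge> 0" "z2 \<ge> 0"
    using assms(1-3) by (auto simp: Q1_def u w z)
  have d1: "u1*w2 > u2*w1" and d2: "w1*z2 > w2*z1" using assms(4,5) by (auto simp: det2_def u w z)
  have w1p: "w1 > 0"
  proof (rule ccontr)
    assume "\<not> w1 > 0" then have "w1 = 0" using nn by simp
    moreover have "w2*z1 \<ge> 0" using nn by simp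
    ultimately show False using d2 by simp
  qed
  have w2p: "w2 > 0"
  proof (rule ccontr)
    assume "\<not> w2 > 0" then have "w2 = 0" using nn by simp
    moreover have "u2*w1 \<ge> 0" using nn by simp
    ultimately show False using d1 by simp
  qed
  have "(u1*w2)*(w1*z2) > (u2*w1)*(w2*z1)"
  proof -
    have "u1*w2 > 0" using d1 nn by (meson le_less_trans mult_nonneg_nonneg)
    have "(u1*w2)*(w1*z2) > (u1*w2)*(w2*z1)" using d2 \<open>u1*w2 > 0\<close> by (rule mult_strict_left_mono)
    moreover have "(u1*w2)*(w2*z1) \<ge> (u2*w1)*(w2*z1)"
      using d1 nn by (simp add: mult_right_mono)
    ultimately show ?thesis by simp
  qed
  then have "(w1*w2)*(u1*z2) > (w1*w2)*(u2*z1)" by (simp add: algebra_simps)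
  then have "u1*z2 > u2*z1" using w1p w2p
    by (meson mult_less_cancel_left_pos zero_less_mult_iff)
  then show ?thesis by (simp add: det2_def u z)
qed

lemma chain:
  assumes d: "\<forall>j\<in>{i..<n}. det2 (w j) (w (Suc j)) = 1"
    and q: "\<forall>j\<in>{i..n}. Q1 (w j)"
    and "i \<le> j" "j < k" "k \<le> n"
  shows "det2 (w j) (w k) > 0"
  using assms(4,5)
proof (induction k)
  case 0 then show ?case by simp
next
  case (Suc k)
  show ?case
  proof (cases "j = k")
    case True then show ?thesis using d \<open>i \<le> j\<close> Suc.prems by auto
  next
    case False
    then have "det2 (w j) (w k) > 0" using Suc by auto
    moreover have "det2 (w k) (w (Suc k)) = 1" using d Suc.prems \<open>i \<le> j\<close> by auto
    ultimately show ?thesis using ccw_trans[of "w j" "w k" "w (Suc k)"] q Suc.prems \<open>i \<le> j\<close>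
      by auto
  qed
qed

lemma decomp:
  assumes "det2 u w = 1"
  shows "g = lc (det2 g w) u (det2 u g) w"
proof -
  obtain u1 u2 where u: "u = (u1,u2)" by (cases u)
  obtain w1 w2 where w: "w = (w1,w2)" by (cases w)
  obtain g1 g2 where g: "g = (g1,g2)" by (cases g)
  have e: "u1*w2 - u2*w1 = 1" using assms by (simp add: det2_def u w)
  have "(g1*w2 - g2*w1)*u1 + (u1*g2-u2*g1)*w1 = g1*(u1*w2 - u2*w1)" by (simp add: algebra_simps)
  moreover have "(g1*w2 - g2*w1)*u2 + (u1*g2-u2*g1)*w2 = g2*(u1*w2 - u2*w1)" by (simp add: algebra_simps)
  ultimately show ?thesis using e by (simp add: lc_def det2_def u w g)
qed

lemma sweep:
  assumes m: "1 \<le> m" and w1: "w 1 = (1,0)" and wm: "w m = (0,1)"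
    and d: "\<forall>j\<in>{1..<m}. det2 (w j) (w (Suc j)) = 1"
    and q: "\<forall>j\<in>{1..m}. Q1 (w j)"
    and g: "Q1 g"
  shows "(\<exists>j\<in>{1..m}. \<exists>l>0. g = sm l (w j)) \<or>
         (\<exists>j\<in>{1..<m}. \<exists>l>0. \<exists>l'>0. g = lc l (w j) l' (w (Suc j)))"
proof -
  obtain g1 g2 where gg: "g = (g1,g2)" by (cases g)
  have gn: "g1 \<ge> 0" "g2 \<ge> 0" "(g1,g2) \<noteq> (0,0)" using g by (auto simp: Q1_def gg)
  define D where "D j = det2 (w j) g" for j
  have D1: "D 1 \<ge> 0" using gn unfolding D_def w1 det2_def gg by simp
  have Dm: "D m = - g1" by (simp add: D_def wm det2_def gg)
  show ?thesis
  proof (cases "\<exists>j\<in>{1..<m}. D j = 0")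
    case True
    then obtain j where j: "j \<in> {1..<m}" "D j = 0" by auto
    have dj: "det2 (w j) (w (Suc j)) = 1" using d j by auto
    define l where "l = det2 g (w (Suc j))"
    have gl: "g = sm l (w j)" using decomp[OF dj, of g] j(2)
      by (simp add: D_def l_def lc_def sm_def)
    obtain a1 a2 where wj: "w j = (a1,a2)" by (cases "w j")
    have "Q1 (w j)" using q j by auto
    then have an: "a1 \<ge> 0" "a2 \<ge> 0" "(a1,a2) \<noteq> (0,0)" unfolding wj Q1_def by auto
    have "l > 0"
    proof (rule ccontr)
      assume "\<not> l > 0"
      then have "l \<le> 0" by simp
      then have "l * a1 \<le> 0" "l * a2 \<le> 0" using an by (simp_all add: mult_nonpos_nonneg)
      then have "g1 = 0 \<and> g2 = 0" using gl gn by (simp add: sm_def wj gg)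
      then show False using gn by simp
    qed
    then show ?thesis using gl j by auto
  next
    case False
    show ?thesis
    proof (cases "g1 = 0")
      case True
      then have "g2 > 0" using gn by auto
      have "g = sm g2 (w m)" using True by (simp add: wm sm_def gg)
      then show ?thesis using m \<open>g2 > 0\<close> by auto
    next
      case g1n: False
      then have "D m < 0" using Dm gn by simp
      have "D 1 > 0"
      proof -
        have "1 < m"
        proof (rule ccontr)
          assume "\<not> 1 < m" then have "m = 1" using m by simp
          then show False using w1 wm by simp
        qed
        then have "D 1 \<noteq> 0" using False by auto
        then show ?thesis using D1 by simp
      qed
      define S where "S = {j\<in>{1..m}. D j < 0}"
      have "m \<in> S" using \<open>D m < 0\<close> m by (simp add: S_def)
      define k where "k = Min S"
      have fS: "finite S" by (simp add: S_def)
      have kS: "k \<in> S" using fS \<open>m \<in> S\<close> unfolding k_def by (intro Min_in) auto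
      have kmin: "\<And>j. j \<in> S \<Longrightarrow> k \<le> j" using fS by (simp add: k_def)
      have "k \<noteq> 1" using kS \<open>D 1 > 0\<close> by (auto simp: S_def)
      then have k2: "k \<ge> 2" using kS by (auto simp: S_def)
      define j where "j = k - 1"
      have jk: "Suc j = k" using k2 by (simp add: j_def)
      have jr: "j \<in> {1..<m}" using k2 kS by (auto simp: S_def j_def)
      have "j \<notin> S" using kmin[of j] k2 by (auto simp: j_def)
      then have "D j \<ge> 0" using jr by (auto simp: S_def)
      then have "D j > 0" using False jr by force
      have dj: "det2 (w j) (w (Suc j)) = 1" using d jr by auto
      have "D (Suc j) < 0" using kS jk by (simp add: S_def)
      have "g = lc (det2 g (w (Suc j))) (w j) (D j) (w (Suc j))"
        using decomp[OF dj, of g] by (simp add: D_def)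
      moreover have "det2 g (w (Suc j)) = - D (Suc j)"
        by (simp add: D_def det2_def)
      ultimately show ?thesis using \<open>D j > 0\<close> \<open>D (Suc j) < 0\<close> jr
        by (metis neg_0_less_iff_less)
    qed
  qed
qed



locale walk =
  fixes V :: "nat \<Rightarrow> v2 set" and q :: "nat \<Rightarrow> int"
  assumes step: "\<And>k. V (Suc k) = app (Fm (Suc k) (q (Suc k))) ` V k"
    and sgcV: "\<And>k u. u \<in> V k \<Longrightarrow> sgc u"
    and ax1: "\<And>k n. (n,0) \<in> V k \<longleftrightarrow> n = 1 \<or> n = -1"
    and ax2: "\<And>k n. (0,n) \<in> V k \<longleftrightarrow> n = 1 \<or> n = -1"
    and negV: "\<And>k u. u \<in> V k \<Longrightarrow> sm (-1) u \<in> V k"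
begin

lemma app_id: "app (1,0,0,1) u = u"
  by (cases u) simp

lemma VG: "V k = app (Gm q k) ` V 0"
  by (induction k) (auto simp: step image_image app_mmul app_id)

lemma det_self: "det2 u u = 0"
  by (simp add: det2_def mult.commute)

lemma G_in: "u \<in> V 0 \<Longrightarrow> app (Gm q k) u \<in> V k"
proof -
  assume "u \<in> V 0"
  then show ?thesis by (subst VG[of k]) auto
qed

lemma ee_in: "sm (-1) (ee k) \<in> V k"
  by (auto simp: ee_def sm_def ax1 ax2)

lemma v_in: "vs q k \<in> V 0"
proof -
  have "sm (-1) (ee k) \<in> app (Gm q k) ` V 0" using ee_in VG[of k] by metis
  then obtain u where "u \<in> V 0" "app (Gm q k) u = app (Gm q k) (vs q k)"
    using G_v[of q k] by auto
  then show ?thesis using Gm_inj by metis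
qed

lemma no_between:
  assumes "l > 0" "l' > 0"
  shows "lc l (vs q k) l' (vs q (Suc k)) \<notin> V 0"
proof
  assume "lc l (vs q k) l' (vs q (Suc k)) \<in> V 0"
  then have "app (Gm q k) (lc l (vs q k) l' (vs q (Suc k))) \<in> V k" by (rule G_in)
  then have "lc l (sm (-1) (ee k)) l' (ee (Suc k)) \<in> V k" using G_v[of q k] by (simp add: app_lc)
  then have "sgc (lc l (sm (-1) (ee k)) l' (ee (Suc k)))" by (rule sgcV)
  then show False using assms by (cases "odd k") (auto simp: sgc_def lc_def sm_def ee_def)
qed

lemma mult1:
  assumes "l > 0" "sm l (vs q k) \<in> V 0" shows "l = 1"
proof -
  have "app (Gm q k) (sm l (vs q k)) \<in> V k" using assms(2) by (rule G_in)
  then have "sm l (sm (-1) (ee k)) \<in> V k" using G_v[of q k] by (simp add: app_sm)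
  then have "l = 1 \<or> l = -1" by (cases "odd k") (auto simp: sm_def ee_def ax1 ax2)
  then show ?thesis using assms(1) by auto
qed

lemma zero_notin: "(0,0) \<notin> V k"
  using ax1[of 0 k] by simp

lemma Q1_v_chain:
  assumes "\<forall>j\<in>{1..n}. Q1 (vs q j)" "1 \<le> j" "j < k" "k \<le> n"
  shows "det2 (vs q j) (vs q k) > 0"
  using chain[of 1 n "vs q" j k] assms det_v by auto

lemma exit_lemma:
  assumes fin: "finite (V 0)"
  shows "\<exists>m. 2 \<le> m \<and> (\<forall>j\<in>{1..m}. Q1 (vs q j)) \<and> vs q m = (0,1) \<and> vs q (Suc m) = (-1,0)"
proof -
  have ex: "\<exists>j. 1 \<le> j \<and> \<not> Q1 (vs q j)"
  proof (rule ccontr)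
    assume "\<not> ?thesis"
    then have allq: "\<forall>j\<in>{1..n}. Q1 (vs q j)" for n by auto
    define N where "N = Suc (card (V 0))"
    have "inj_on (vs q) {1..N}"
    proof (rule inj_onI)
      fix j k assume jk: "j \<in> {1..N}" "k \<in> {1..N}" "vs q j = vs q k"
      show "j = k"
      proof (rule ccontr)
        assume "j \<noteq> k"
        then consider "j < k" | "k < j" by linarith
        then show False
        proof cases
          case 1 then have "det2 (vs q j) (vs q k) > 0" using Q1_v_chain[OF allq, of j k N] jk(1,2) by auto
          then show False using jk(3) det_self[of "vs q k"] by simp
        next
          case 2 then have "det2 (vs q k) (vs q j) > 0" using Q1_v_chain[OF allq, of k j N] jk(1,2) by auto
          then show False using jk(3) det_self[of "vs q k"] by simp
        qed
      qed
    qed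
    then have "card (vs q ` {1..N}) = N" by (simp add: card_image)
    moreover have "vs q ` {1..N} \<subseteq> V 0" using v_in by auto
    ultimately have "N \<le> card (V 0)" using fin by (metis card_mono)
    then show False by (simp add: N_def)
  qed
  define j0 where "j0 = (LEAST j. 1 \<le> j \<and> \<not> Q1 (vs q j))"
  have j0: "1 \<le> j0" "\<not> Q1 (vs q j0)" using LeastI_ex[OF ex] by (simp_all add: j0_def)
  have j0min: "\<And>j. 1 \<le> j \<Longrightarrow> j < j0 \<Longrightarrow> Q1 (vs q j)"
    using not_less_Least j0_def by blast
  have "j0 \<noteq> 1" using j0 by (auto simp: vs_1 Q1_def)
  then have "j0 \<ge> 2" using j0 by simp
  define m where "m = j0 - 1"
  have mj: "Suc m = j0" using \<open>j0 \<ge> 2\<close> by (simp add: m_def)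
  have allq: "\<forall>j\<in>{1..m}. Q1 (vs q j)" using j0min mj by auto
  have "m \<ge> 1" using \<open>j0 \<ge> 2\<close> by (simp add: m_def)
  obtain u w where vm: "vs q m = (u,w)" by (cases "vs q m")
  obtain s t where vm1: "vs q (Suc m) = (-s,-t)" by (metis minus_minus surj_pair)
  have "Q1 (vs q m)" using allq \<open>m \<ge> 1\<close> by auto
  then have uw: "u \<ge> 0" "w \<ge> 0" by (auto simp: Q1_def vm)
  have "sgc (vs q (Suc m))" using v_in sgcV by blast
  moreover have "vs q (Suc m) \<noteq> (0,0)" using det_v[of q m] by (auto simp: det2_def)
  ultimately have st: "s \<ge> 0" "t \<ge> 0" using j0(2) mj by (auto simp: sgc_def Q1_def vm1)
  have dt: "w*s - u*t = 1" using det_v[of q m] by (simp add: det2_def vm vm1)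
  have e1: "(-1,0) = lc t (vs q m) w (vs q (Suc m))" using dt by (simp add: lc_def vm vm1 algebra_simps)
  have e2: "(0,1) = lc s (vs q m) u (vs q (Suc m))" using dt by (simp add: lc_def vm vm1 algebra_simps)
  have "(-1,0) \<in> V 0" "(0,1) \<in> V 0" by (simp_all add: ax1 ax2)
  then have c1: "\<not> (t > 0 \<and> w > 0)" and c2: "\<not> (s > 0 \<and> u > 0)"
    using no_between[of t w m] no_between[of s u m] e1 e2 by auto
  have "u*t \<ge> 0" using uw st by simp
  then have "w*s \<ge> 1" using dt by linarith
  then have "w*s > 0" by linarith
  then have "w > 0" "s > 0" using uw st by (auto simp: zero_less_mult_iff)
  then have "t = 0" "u = 0" using c1 c2 uw st by auto
  then have "w * s = 1" using dt by simp
  then have "w = 1" "s = 1" using \<open>w > 0\<close> \<open>s > 0\<close> by (simp_all add: pos_zmult_eq_1_iff)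
  have vmm: "vs q m = (0,1)" using vm \<open>w = 1\<close> \<open>u = 0\<close> by simp
  have "m \<noteq> 1"
  proof
    assume "m = 1" then show False using vmm by simp
  qed
  then have "m \<ge> 2" using \<open>m \<ge> 1\<close> by simp
  show ?thesis
    apply (rule exI[of _ m])
    using \<open>m \<ge> 2\<close> vmm mj allq vm vm1 \<open>w = 1\<close> \<open>s = 1\<close> \<open>t = 0\<close> \<open>u = 0\<close> by (auto simp: m_def)
qed

lemma pos_char:
  assumes m: "1 \<le> m" and q1: "\<forall>j\<in>{1..m}. Q1 (vs q j)" and vm: "vs q m = (0,1)"
  shows "{u \<in> V 0. Q1 u} = vs q ` {1..m}" and "card {u \<in> V 0. Q1 u} = m"
proof -
  show eq: "{u \<in> V 0. Q1 u} = vs q ` {1..m}"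
  proof
    show "vs q ` {1..m} \<subseteq> {u \<in> V 0. Q1 u}" using v_in q1 by auto
  next
    show "{u \<in> V 0. Q1 u} \<subseteq> vs q ` {1..m}"
    proof
      fix g assume g: "g \<in> {u \<in> V 0. Q1 u}"
      have "(\<exists>j\<in>{1..m}. \<exists>l>0. g = sm l (vs q j)) \<or>
         (\<exists>j\<in>{1..<m}. \<exists>l>0. \<exists>l'>0. g = lc l (vs q j) l' (vs q (Suc j)))"
        using sweep[of m "vs q" g] m vs_1 vm q1 det_v g by auto
      then show "g \<in> vs q ` {1..m}"
      proof
        assume "\<exists>j\<in>{1..m}. \<exists>l>0. g = sm l (vs q j)"
        then obtain j l where "j \<in> {1..m}" "l > 0" "g = sm l (vs q j)" by auto
        then have "l = 1" using mult1 g by auto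
        then show ?thesis using \<open>g = sm l (vs q j)\<close> \<open>j \<in> {1..m}\<close> by (simp add: sm_def)
      next
        assume "\<exists>j\<in>{1..<m}. \<exists>l>0. \<exists>l'>0. g = lc l (vs q j) l' (vs q (Suc j))"
        then show ?thesis using no_between g by blast
      qed
    qed
  qed
  have "inj_on (vs q) {1..m}"
  proof (rule inj_onI)
    fix j k assume jk: "j \<in> {1..m}" "k \<in> {1..m}" "vs q j = vs q k"
    show "j = k"
    proof (rule ccontr)
      assume "j \<noteq> k"
      then consider "j < k" | "k < j" by linarith
      then show False
      proof cases
        case 1 then have "det2 (vs q j) (vs q k) > 0" using Q1_v_chain[OF q1, of j k] jk(1,2) by auto
        then show False using jk(3) det_self[of "vs q k"] by simp
      next
        case 2 then have "det2 (vs q k) (vs q j) > 0" using Q1_v_chain[OF q1, of k j] jk(1,2) by auto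
        then show False using jk(3) det_self[of "vs q k"] by simp
      qed
    qed
  qed
  then show "card {u \<in> V 0. Q1 u} = m" using eq by (simp add: card_image)
qed

lemma finite_V0:
  assumes m: "1 \<le> m" and q1: "\<forall>j\<in>{1..m}. Q1 (vs q j)" and vm: "vs q m = (0,1)"
  shows "finite (V 0)"
proof -
  have "V 0 \<subseteq> vs q ` {1..m} \<union> sm (-1) ` vs q ` {1..m}"
  proof
    fix u assume u: "u \<in> V 0"
    have "sgc u" using u sgcV by blast
    moreover have "u \<noteq> (0,0)" using u zero_notin by blast
    ultimately have "Q1 u \<or> Q1 (sm (-1) u)" by (auto simp: sgc_def Q1_def sm_def)
    then show "u \<in> vs q ` {1..m} \<union> sm (-1) ` vs q ` {1..m}"
    proof
      assume "Q1 u" then show ?thesis using pos_char(1)[OF m q1 vm] u by auto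
    next
      assume h: "Q1 (sm (-1) u)"
      have "sm (-1) u \<in> V 0" using negV u by blast
      then have "sm (-1) u \<in> vs q ` {1..m}" using pos_char(1)[OF m q1 vm] h by auto
      moreover have "u = sm (-1) (sm (-1) u)" by (simp add: sm_def)
      ultimately show ?thesis by blast
    qed
  qed
  then show ?thesis by (rule finite_subset) auto
qed

end


definition ht :: "v2 \<Rightarrow> int" where "ht u = fst u + snd u"

lemma ht_same:
  assumes "Q1 u" "Q1 u'" "ht u = ht u'" "det2 u u' = 1" shows "ht u = 1"
proof -
  obtain a b where u: "u = (a,b)" by (cases u)
  obtain c d where u': "u' = (c,d)" by (cases u')
  have "a + b = c + d" using assms(3) by (simp add: ht_def u u')
  then have hb: "b = c + d - a" by linarith
  have "a*d - b*c = 1" using assms(4) by (simp add: det2_def u u')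
  then have "a*d - (c+d-a)*c = 1" using hb by simp
  then have "(c+d)*(a-c) = 1" by (simp add: algebra_simps)
  moreover have "c + d \<ge> 0" using assms(2) by (simp add: Q1_def u')
  ultimately have "c + d = 1" by (simp add: zmult_eq_1_iff)
  then show ?thesis using assms(3) by (simp add: ht_def u u')
qed

lemma ht_pos: "Q1 u \<Longrightarrow> ht u \<ge> 1"
  by (cases u) (auto simp: Q1_def ht_def)

lemma ht_one: "Q1 u \<Longrightarrow> ht u = 1 \<Longrightarrow> u = (1,0) \<or> u = (0,1)"
  by (cases u) (auto simp: Q1_def ht_def)

lemma sum_remove:
  fixes p :: "nat \<Rightarrow> int"
  assumes "1 \<le> k" "k \<le> n"
  shows "(\<Sum>j=1..n-1. (if j < k then p j else p (Suc j))) = (\<Sum>j=1..n. p j) - p k"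
proof -
  have A: "(\<Sum>j=1..n-1. (if j < k then p j else p (Suc j))) =
      (\<Sum>j\<in>{1..<k}. p j) + (\<Sum>j\<in>{k..n-1}. p (Suc j))"
  proof -
    have "{1..n-1} = {1..<k} \<union> {k..n-1}" using assms by auto
    then have "(\<Sum>j=1..n-1. (if j < k then p j else p (Suc j))) =
       (\<Sum>j\<in>{1..<k}. (if j < k then p j else p (Suc j))) + (\<Sum>j\<in>{k..n-1}. (if j < k then p j else p (Suc j)))"
      by (simp add: sum.union_disjoint ivl_disj_int)
    then show ?thesis by simp
  qed
  have B: "(\<Sum>j\<in>{k..n-1}. p (Suc j)) = (\<Sum>j\<in>{Suc k..n}. p j)"
    using assms sum.shift_bounds_cl_Suc_ivl[of p k "n-1"] by simp
  have C: "(\<Sum>j=1..n. p j) = (\<Sum>j\<in>{1..<k}. p j) + p k + (\<Sum>j\<in>{Suc k..n}. p j)"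
  proof -
    have "{1..n} = {1..<k} \<union> {k..n}" using assms by auto
    then have "(\<Sum>j=1..n. p j) = (\<Sum>j\<in>{1..<k}. p j) + (\<Sum>j\<in>{k..n}. p j)"
      by (simp add: sum.union_disjoint ivl_disj_int)
    moreover have "(\<Sum>j\<in>{k..n}. p j) = p k + (\<Sum>j\<in>{Suc k..n}. p j)"
      using assms by (simp add: sum.atLeast_Suc_atMost)
    ultimately show ?thesis by simp
  qed
  show ?thesis using A B C by simp
qed

lemma quid:
  fixes w :: "nat \<Rightarrow> v2" and p :: "nat \<Rightarrow> int"
  assumes "2 \<le> n" "w 0 = (0,-1)" "w 1 = (1,0)" "w n = (0,1)" "w (Suc n) = (-1,0)"
    "\<forall>j\<in>{1..n}. Q1 (w j)" "\<forall>j\<le>n. det2 (w j) (w (Suc j)) = 1"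
    "\<forall>j\<in>{1..n}. lc 1 (w (j-1)) 1 (w (Suc j)) = sm (p j) (w j)"
  shows "(\<Sum>j=1..n. p j) = 3 * int n - 6"
  using assms
proof (induction n arbitrary: w p rule: less_induct)
  case (less n)
  show ?case
  proof (cases "n = 2")
    case True
    have "lc 1 (w 0) 1 (w 2) = sm (p 1) (w 1)" using less.prems(8)[rule_format, of 1] True by (simp add: numeral_2_eq_2)
    then have p1: "p 1 = 0" using less.prems True by (simp add: lc_def sm_def)
    have "lc 1 (w 1) 1 (w 3) = sm (p 2) (w 2)" using less.prems(8)[rule_format, of 2] True by (simp add: numeral_3_eq_3)
    then have p2: "p 2 = 0" using less.prems True by (simp add: lc_def sm_def numeral_3_eq_3)
    show ?thesis using True p1 p2 by (simp add: numeral_2_eq_2)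
  next
    case False
    then have n3: "n \<ge> 3" using less.prems(1) by simp
    note P = less.prems
    have chainw: "\<And>j k. 1 \<le> j \<Longrightarrow> j < k \<Longrightarrow> k \<le> n \<Longrightarrow> det2 (w j) (w k) > 0"
      using chain[of 1 n w] P(6,7) by auto
    define S where "S = {2..n-1}"
    have fS: "finite S" and neS: "S \<noteq> {}" using n3 by (auto simp: S_def)
    define M where "M = Max ((\<lambda>j. ht (w j)) ` S)"
    have "M \<in> (\<lambda>j. ht (w j)) ` S" using fS neS by (simp add: M_def)
    then obtain k where kS: "k \<in> S" and hk: "ht (w k) = M" by auto
    have kmax: "\<And>j. j \<in> S \<Longrightarrow> ht (w j) \<le> ht (w k)" using fS hk by (simp add: M_def)
    have k: "2 \<le> k" "k \<le> n - 1" using kS by (auto simp: S_def)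
    have Qk: "Q1 (w k)" using P(6) k by auto
    have "w k \<noteq> (1,0)"
    proof
      assume "w k = (1,0)"
      then have "det2 (w 1) (w k) = 0" using P(3) by (simp add: det2_def)
      moreover have "k \<le> n" using k by simp
      ultimately show False using chainw[of 1 k] k by simp
    qed
    moreover have "w k \<noteq> (0,1)"
    proof
      assume "w k = (0,1)"
      then have "det2 (w k) (w n) = 0" using P(4) by (simp add: det2_def)
      moreover have "k < n" using k n3 by simp
      ultimately show False using chainw[of k n] k by simp
    qed
    ultimately have hk2: "ht (w k) \<noteq> 1" using ht_one Qk by blast
    have "1 \<le> k-1" "k-1 \<le> n" using k by auto
    then have Qkm: "Q1 (w (k-1))" using P(6) by auto
    have Qkp: "Q1 (w (Suc k))" using P(6)[rule_format, of "Suc k"] k by auto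
    have dkm: "det2 (w (k-1)) (w k) = 1" using P(7) k by (metis Suc_diff_1 less_le_trans diff_le_self le_trans nat_le_linear not_less_eq_eq numeral_2_eq_2 zero_less_Suc)
    have dkp: "det2 (w k) (w (Suc k)) = 1" using P(7) k by auto
    have hm: "ht (w (k-1)) \<le> ht (w k)"
    proof (cases "k - 1 = 1")
      case True then show ?thesis using P(3) ht_pos[OF Qk] by (simp add: ht_def)
    next
      case False
      then have "2 \<le> k - 1" "k - 1 \<le> n - 1" using k by linarith+
      then show ?thesis using kmax[of "k-1"] by (simp add: S_def)
    qed
    have hp: "ht (w (Suc k)) \<le> ht (w k)"
    proof (cases "Suc k = n")
      case True then show ?thesis using P(4) ht_pos[OF Qk] by (simp add: ht_def)
    next
      case False
      then have "2 \<le> Suc k" "Suc k \<le> n - 1" using k by linarith+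
      then show ?thesis using kmax[of "Suc k"] by (simp add: S_def)
    qed
    have hm': "ht (w (k-1)) < ht (w k)" using hm ht_same[OF Qkm Qk _ dkm] hk2 by force
    have hp': "ht (w (Suc k)) < ht (w k)" using hp ht_same[OF Qk Qkp _ dkp] hk2 by force
    have rk: "lc 1 (w (k-1)) 1 (w (Suc k)) = sm (p k) (w k)" using P(8) k by auto
    then have "ht (w (k-1)) + ht (w (Suc k)) = p k * ht (w k)"
      by (simp add: lc_def sm_def ht_def prod_eq_iff algebra_simps)
    moreover have "ht (w (k-1)) \<ge> 1" "ht (w (Suc k)) \<ge> 1" using ht_pos Qkm Qkp by auto
    ultimately have l1: "p k * ht (w k) < 2 * ht (w k)" and l2: "p k * ht (w k) > 0"
      using hm' hp' by linarith+
    have hkp: "ht (w k) > 0" using ht_pos[OF Qk] by simp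
    have "p k < 2" using l1 hkp by (simp add: mult_less_cancel_right)
    moreover have "p k > 0" using l2 hkp by (simp add: zero_less_mult_iff)
    ultimately have pk1: "p k = 1" by simp
    have wkp: "w (Suc k) = lc 1 (w k) (-1) (w (k-1))"
      using rk pk1 by (simp add: lc_def sm_def prod_eq_iff)
    have wkc: "fst (w (Suc k)) = fst (w k) - fst (w (k-1))" "snd (w (Suc k)) = snd (w k) - snd (w (k-1))"
      using wkp by (simp_all add: lc_def)
    define w' where "w' j = (if j < k then w j else w (Suc j))" for j
    define p' where "p' j = (if j < k then p j else p (Suc j)) - (if j = k - 1 \<or> j = k then 1 else 0)" for j
    have IH: "(\<Sum>j=1..n-1. p' j) = 3 * int (n-1) - 6"
    proof (rule less.IH)
      show "n - 1 < n" "2 \<le> n - 1" using n3 by auto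
      show "w' 0 = (0,-1)" using k P(2) by (simp add: w'_def)
      show "w' 1 = (1,0)" using k P(3) by (simp add: w'_def)
      show "w' (n-1) = (0,1)" using k P(4) n3 by (simp add: w'_def)
      show "w' (Suc (n-1)) = (-1,0)"
      proof -
        have "\<not> n < k" "Suc (n-1) = n" using k n3 by linarith+
        then show ?thesis using P(5) by (simp add: w'_def)
      qed
      show "\<forall>j\<in>{1..n-1}. Q1 (w' j)" using P(6) k by (auto simp: w'_def)
      show "\<forall>j\<le>n-1. det2 (w' j) (w' (Suc j)) = 1"
      proof (intro allI impI)
        fix j assume j: "j \<le> n - 1"
        consider "Suc j < k" | "Suc j = k" | "j \<ge> k" by linarith
        then show "det2 (w' j) (w' (Suc j)) = 1"
        proof cases
          case 1 then show ?thesis using P(7) j k by (auto simp: w'_def)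
        next
          case 2
          then have "w' j = w (k-1)" "w' (Suc j) = w (Suc k)" by (auto simp: w'_def)
          then show ?thesis using wkp dkm by (simp add: det2_def lc_def algebra_simps)
        next
          case 3 then show ?thesis using P(7) j k by (auto simp: w'_def)
        qed
      qed
      show "\<forall>j\<in>{1..n-1}. lc 1 (w' (j-1)) 1 (w' (Suc j)) = sm (p' j) (w' j)"
      proof
        fix j assume j: "j \<in> {1..n-1}"
        consider "Suc j < k" | "Suc j = k" | "j = k" | "j > k" by linarith
        then show "lc 1 (w' (j-1)) 1 (w' (Suc j)) = sm (p' j) (w' j)"
        proof cases
          case 1 then show ?thesis using P(8) j k by (auto simp: w'_def p'_def)
        next
          case 2
          then have e: "w' (j-1) = w (k-2)" "w' (Suc j) = w (Suc k)" "w' j = w (k-1)" "p' j = p (k-1) - 1"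
            using k by (auto simp: w'_def p'_def)
          have kk: "k-1 \<in> {1..n}" "k-1-1 = k-2" "Suc (k-1) = k" using k by auto
          have "lc 1 (w (k-1-1)) 1 (w (Suc (k-1))) = sm (p (k-1)) (w (k-1))"
            using P(8) kk(1) by blast
          then have "lc 1 (w (k-2)) 1 (w k) = sm (p (k-1)) (w (k-1))"
            unfolding kk(2,3) .
          then show ?thesis unfolding e using wkc by (simp add: lc_def sm_def prod_eq_iff left_diff_distrib)
        next
          case 3
          then have e: "w' (j-1) = w (k-1)" "w' (Suc j) = w (Suc (Suc k))" "w' j = w (Suc k)" "p' j = p (Suc k) - 1"
            using k by (auto simp: w'_def p'_def)
          have "Suc k \<in> {1..n}" using k by auto
          then have "lc 1 (w (Suc k - 1)) 1 (w (Suc (Suc k))) = sm (p (Suc k)) (w (Suc k))"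
            using P(8) by blast
          then have "lc 1 (w k) 1 (w (Suc (Suc k))) = sm (p (Suc k)) (w (Suc k))" by simp
          then show ?thesis unfolding e using wkc by (simp add: lc_def sm_def prod_eq_iff left_diff_distrib)
        next
          case 4
          then have e: "w' (j-1) = w j" "w' (Suc j) = w (Suc (Suc j))" "w' j = w (Suc j)" "p' j = p (Suc j)"
            using k by (auto simp: w'_def p'_def)
          have "Suc j \<in> {1..n}" using j by auto
          then have "lc 1 (w (Suc j - 1)) 1 (w (Suc (Suc j))) = sm (p (Suc j)) (w (Suc j))"
            using P(8) by blast
          then show ?thesis unfolding e by simp
        qed
      qed
    qed
    have "(\<Sum>j=1..n-1. p' j) = (\<Sum>j=1..n-1. (if j < k then p j else p (Suc j))) - 2"
    proof -
      have "(\<Sum>j=1..n-1. p' j) = (\<Sum>j=1..n-1. (if j < k then p j else p (Suc j))) -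
              (\<Sum>j=1..n-1. (if j = k - 1 \<or> j = k then 1 else 0))"
        by (simp add: p'_def sum_subtractf)
      moreover have "(\<Sum>j=1..n-1. (if j = k - 1 \<or> j = k then 1::int else 0)) = 2"
      proof -
        have "{1..n-1} \<inter> {j. j = k - 1 \<or> j = k} = {k-1, k}" using k by auto
        then have "(\<Sum>j=1..n-1. (if j = k - 1 \<or> j = k then 1::int else 0)) = (\<Sum>j\<in>{k-1,k}. 1)"
          by (simp add: sum.If_cases)
        also have "\<dots> = 2" using k by simp
        finally show ?thesis .
      qed
      ultimately show ?thesis by simp
    qed
    then have "(\<Sum>j=1..n-1. p' j) = (\<Sum>j=1..n. p j) - 3"
      using sum_remove[of k n p] k pk1 by simp
    then show ?thesis using IH n3 by simp
  qed
qed



definition P :: "(nat \<Rightarrow> int) \<Rightarrow> v2" where "P v = (v 1, v 2)"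
definition Ps :: "(nat \<Rightarrow> int) \<Rightarrow> v2" where "Ps v = (v 2, v 1)"

lemma sum12: "(\<Sum>j\<in>{1::nat,2}. f j) = f 1 + f 2" by simp

lemma P_sigma1:
  assumes "C a 1 1 = 2" "odd k"
  shows "P (sigma {1,2} C 1 a v) = app (Fm k (- C a 1 2)) (P v)"
  using assms by (simp add: P_def sigma_def alpha_def Fm_def algebra_simps)

lemma P_sigma2:
  assumes "C a 2 2 = 2" "even k"
  shows "P (sigma {1,2} C 2 a v) = app (Fm k (- C a 2 1)) (P v)"
  using assms by (simp add: P_def sigma_def alpha_def Fm_def algebra_simps)

lemma Ps_sigma2:
  assumes "C a 2 2 = 2" "odd k"
  shows "Ps (sigma {1,2} C 2 a v) = app (Fm k (- C a 2 1)) (Ps v)"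
  using assms by (simp add: Ps_def sigma_def alpha_def Fm_def algebra_simps)

lemma Ps_sigma1:
  assumes "C a 1 1 = 2" "even k"
  shows "Ps (sigma {1,2} C 1 a v) = app (Fm k (- C a 1 2)) (Ps v)"
  using assms by (simp add: Ps_def sigma_def alpha_def Fm_def algebra_simps)

context
  fixes A :: "'a set" and rho :: "nat \<Rightarrow> 'a \<Rightarrow> 'a" and C :: "'a \<Rightarrow> nat \<Rightarrow> nat \<Rightarrow> int"
    and R :: "'a \<Rightarrow> (nat \<Rightarrow> int) set"
  assumes rs: "root_system {1::nat,2} A rho C R"
begin

lemma R_zvec: "a \<in> A \<Longrightarrow> R a \<subseteq> zvec {1,2}"
  using rs by (simp add: root_system_def)

lemma R_R1: "a \<in> A \<Longrightarrow> R a = pos_roots {1,2} (R a) \<union> (\<lambda>v k. - v k) ` pos_roots {1,2} (R a)"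
  using rs by (simp add: root_system_def)

lemma R_R2: "a \<in> A \<Longrightarrow> i \<in> {1,2} \<Longrightarrow> R a \<inter> {(\<lambda>k. n * alpha i k) | n. True} = {alpha i, (\<lambda>k. - alpha i k)}"
  using rs unfolding root_system_def by blast

lemma R_R3: "a \<in> A \<Longrightarrow> i \<in> {1,2} \<Longrightarrow> sigma {1,2} C i a ` R a = R (rho i a)"
  using rs unfolding root_system_def by blast

lemma zvec_eq: "v \<in> zvec {1::nat,2} \<Longrightarrow> v = (\<lambda>k. v 1 * alpha 1 k + v 2 * alpha 2 k)"
  by (auto simp: zvec_def alpha_def fun_eq_iff)

lemma P_inj: "a \<in> A \<Longrightarrow> inj_on P (R a)"
proof (rule inj_onI)
  fix u v assume a: "a \<in> A" and uv: "u \<in> R a" "v \<in> R a" "P u = P v"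
  have zu: "u \<in> zvec {1,2}" and zv: "v \<in> zvec {1,2}" using uv R_zvec[OF a] by auto
  have "u = (\<lambda>k. u 1 * alpha 1 k + u 2 * alpha 2 k)" using zu by (rule zvec_eq)
  moreover have "v = (\<lambda>k. v 1 * alpha 1 k + v 2 * alpha 2 k)" using zv by (rule zvec_eq)
  moreover have "u 1 = v 1" "u 2 = v 2" using uv(3) by (auto simp: P_def)
  ultimately show "u = v" by metis
qed

lemma sgc_P: "a \<in> A \<Longrightarrow> v \<in> R a \<Longrightarrow> sgc (P v)"
proof -
  assume a: "a \<in> A" and v: "v \<in> R a"
  then have "v \<in> pos_roots {1,2} (R a) \<or> v \<in> (\<lambda>v k. - v k) ` pos_roots {1,2} (R a)"
    using R_R1[OF a] by blast
  then show ?thesis by (auto simp: pos_roots_def nvec_def sgc_def P_def)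
qed

lemma neg_R: "a \<in> A \<Longrightarrow> v \<in> R a \<Longrightarrow> (\<lambda>k. - v k) \<in> R a"
proof -
  assume a: "a \<in> A" and v: "v \<in> R a"
  then have "v \<in> pos_roots {1,2} (R a) \<or> v \<in> (\<lambda>v k. - v k) ` pos_roots {1,2} (R a)"
    using R_R1[OF a] by blast
  then show ?thesis
  proof
    assume "v \<in> pos_roots {1,2} (R a)"
    then show ?thesis using R_R1[OF a] by blast
  next
    assume "v \<in> (\<lambda>v k. - v k) ` pos_roots {1,2} (R a)"
    then obtain w where "w \<in> pos_roots {1,2} (R a)" "v = (\<lambda>k. - w k)" by auto
    then show ?thesis by (simp add: pos_roots_def)
  qed
qed

lemma ax_P1: "a \<in> A \<Longrightarrow> (n,0) \<in> P ` R a \<longleftrightarrow> n = 1 \<or> n = -1"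
proof -
  assume a: "a \<in> A"
  have "(n,0) \<in> P ` R a \<longleftrightarrow> (\<lambda>k. n * alpha 1 k) \<in> R a"
  proof
    assume "(n,0) \<in> P ` R a"
    then obtain v where v: "v \<in> R a" "v 1 = n" "v 2 = 0" by (auto simp: P_def)
    have "v \<in> zvec {1,2}" using v R_zvec[OF a] by auto
    then have "v = (\<lambda>k. v 1 * alpha 1 k + v 2 * alpha 2 k)" by (rule zvec_eq)
    also have "\<dots> = (\<lambda>k. n * alpha 1 k)" using v by simp
    finally have "v = (\<lambda>k. n * alpha 1 k)" .
    then show "(\<lambda>k. n * alpha 1 k) \<in> R a" using v by simp
  next
    assume h: "(\<lambda>k. n * alpha 1 k) \<in> R a"
    have "P (\<lambda>k. n * alpha 1 k) = (n,0)" by (simp add: P_def alpha_def)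
    then show "(n,0) \<in> P ` R a" using h by (metis image_eqI)
  qed
  also have "\<dots> \<longleftrightarrow> (\<lambda>k. n * alpha (1::nat) k) \<in> {alpha 1, (\<lambda>k. - alpha 1 k)}"
  proof -
    have e: "R a \<inter> {(\<lambda>k. n * alpha (1::nat) k) | n. True} = {alpha 1, (\<lambda>k. - alpha 1 k)}"
      using R_R2[OF a, of 1] by simp
    show ?thesis using e by blast
  qed
  also have "\<dots> \<longleftrightarrow> n = 1 \<or> n = -1"
  proof
    assume "(\<lambda>k. n * alpha (1::nat) k) \<in> {alpha 1, (\<lambda>k. - alpha 1 k)}"
    then consider "(\<lambda>k. n * alpha (1::nat) k) = alpha 1" | "(\<lambda>k. n * alpha (1::nat) k) = (\<lambda>k. - alpha 1 k)"
      by blast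
    then show "n = 1 \<or> n = -1"
    proof cases
      case 1 then show ?thesis by (drule_tac fun_cong[where x=1]) (simp add: alpha_def)
    next
      case 2 then show ?thesis by (drule_tac fun_cong[where x=1]) (simp add: alpha_def)
    qed
  next
    assume "n = 1 \<or> n = -1"
    then show "(\<lambda>k. n * alpha (1::nat) k) \<in> {alpha 1, (\<lambda>k. - alpha 1 k)}" by (auto simp: alpha_def fun_eq_iff)
  qed
  finally show ?thesis .
qed

lemma ax_P2: "a \<in> A \<Longrightarrow> (0,n) \<in> P ` R a \<longleftrightarrow> n = 1 \<or> n = -1"
proof -
  assume a: "a \<in> A"
  have "(0,n) \<in> P ` R a \<longleftrightarrow> (\<lambda>k. n * alpha 2 k) \<in> R a"
  proof
    assume "(0,n) \<in> P ` R a"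
    then obtain v where v: "v \<in> R a" "v 1 = 0" "v 2 = n" by (auto simp: P_def)
    have "v \<in> zvec {1,2}" using v R_zvec[OF a] by auto
    then have "v = (\<lambda>k. v 1 * alpha 1 k + v 2 * alpha 2 k)" by (rule zvec_eq)
    also have "\<dots> = (\<lambda>k. n * alpha 2 k)" using v by simp
    finally have "v = (\<lambda>k. n * alpha 2 k)" .
    then show "(\<lambda>k. n * alpha 2 k) \<in> R a" using v by simp
  next
    assume h: "(\<lambda>k. n * alpha 2 k) \<in> R a"
    have "P (\<lambda>k. n * alpha 2 k) = (0,n)" by (simp add: P_def alpha_def)
    then show "(0,n) \<in> P ` R a" using h by (metis image_eqI)
  qed
  also have "\<dots> \<longleftrightarrow> (\<lambda>k. n * alpha (2::nat) k) \<in> {alpha 2, (\<lambda>k. - alpha 2 k)}"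
  proof -
    have e: "R a \<inter> {(\<lambda>k. n * alpha (2::nat) k) | n. True} = {alpha 2, (\<lambda>k. - alpha 2 k)}"
      using R_R2[OF a, of 2] by simp
    show ?thesis using e by blast
  qed
  also have "\<dots> \<longleftrightarrow> n = 1 \<or> n = -1"
  proof
    assume "(\<lambda>k. n * alpha (2::nat) k) \<in> {alpha 2, (\<lambda>k. - alpha 2 k)}"
    then consider "(\<lambda>k. n * alpha (2::nat) k) = alpha 2" | "(\<lambda>k. n * alpha (2::nat) k) = (\<lambda>k. - alpha 2 k)"
      by blast
    then show "n = 1 \<or> n = -1"
    proof cases
      case 1 then show ?thesis by (drule_tac fun_cong[where x=2]) (simp add: alpha_def)
    next
      case 2 then show ?thesis by (drule_tac fun_cong[where x=2]) (simp add: alpha_def)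
    qed
  next
    assume "n = 1 \<or> n = -1"
    then show "(\<lambda>k. n * alpha (2::nat) k) \<in> {alpha 2, (\<lambda>k. - alpha 2 k)}" by (auto simp: alpha_def fun_eq_iff)
  qed
  finally show ?thesis .
qed

lemma Ps_mem: "(u,w) \<in> Ps ` S \<longleftrightarrow> (w,u) \<in> P ` S"
  by (auto simp: Ps_def P_def image_iff)

lemma walk_gen:
  assumes pr: "pr = P \<or> pr = Ps"
    and oA: "\<And>k. ob k \<in> A"
    and ix: "\<And>k. ix k \<in> {1,2}"
    and orho: "\<And>k. rho (ix (Suc k)) (ob k) = ob (Suc k)"
    and comm: "\<And>k v. pr (sigma {1,2} C (ix (Suc k)) (ob k) v) = app (Fm (Suc k) (qq (Suc k))) (pr v)"
  shows "walk (\<lambda>k. pr ` R (ob k)) qq"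
proof
  fix k
  have "pr ` R (ob (Suc k)) = pr ` sigma {1,2} C (ix (Suc k)) (ob k) ` R (ob k)"
    using R_R3[OF oA ix] orho by metis
  also have "\<dots> = app (Fm (Suc k) (qq (Suc k))) ` pr ` R (ob k)"
    by (simp only: image_image comm)
  finally show "pr ` R (ob (Suc k)) = app (Fm (Suc k) (qq (Suc k))) ` pr ` R (ob k)" .
next
  fix k u assume "u \<in> pr ` R (ob k)"
  then obtain v where v: "v \<in> R (ob k)" "u = pr v" by auto
  have "sgc (P v)" using sgc_P[OF oA v(1)] .
  then show "sgc u" using pr v(2) by (auto simp: Ps_def P_def sgc_def)
next
  fix k n show "(n, 0) \<in> pr ` R (ob k) \<longleftrightarrow> n = 1 \<or> n = -1"
    using pr ax_P1[OF oA] ax_P2[OF oA] Ps_mem by metis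
next
  fix k n show "(0, n) \<in> pr ` R (ob k) \<longleftrightarrow> n = 1 \<or> n = -1"
    using pr ax_P1[OF oA] ax_P2[OF oA] Ps_mem by metis
next
  fix k u assume "u \<in> pr ` R (ob k)"
  then obtain v where "v \<in> R (ob k)" "u = pr v" by auto
  then have "(\<lambda>j. - v j) \<in> R (ob k)" "sm (-1) u = pr (\<lambda>j. - v j)"
    using neg_R[OF oA] pr by (auto simp: sm_def P_def Ps_def)
  then show "sm (-1) u \<in> pr ` R (ob k)" by auto
qed

end


definition qf :: "int \<Rightarrow> int \<Rightarrow> int \<Rightarrow> int \<Rightarrow> nat \<Rightarrow> int" where
  "qf a b c d k = (if k mod 6 = 0 then c else if k mod 6 = 1 then a else if k mod 6 = 2 then d
     else if k mod 6 = 3 then b else if k mod 6 = 4 then d else a)"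

fun wc :: "(nat \<Rightarrow> int) \<Rightarrow> nat \<Rightarrow> nat \<Rightarrow> v2 \<Rightarrow> v2 \<Rightarrow> bool" where
  "wc q 0 j u w = (Q1 u \<and> u = (0,1))"
| "wc q (Suc r) j u w = (if Q1 u then wc q r (Suc j) w (lc (q (Suc j)) w (-1) u) else False)"

lemma wc_correct:
  "wc q r j (vs q j) (vs q (Suc j)) \<longleftrightarrow> (\<forall>i\<in>{j..j+r}. Q1 (vs q i)) \<and> vs q (j+r) = (0,1)"
proof (induction r arbitrary: j)
  case 0 then show ?case by auto
next
  case (Suc r)
  have "wc q (Suc r) j (vs q j) (vs q (Suc j)) \<longleftrightarrow> Q1 (vs q j) \<and> wc q r (Suc j) (vs q (Suc j)) (vs q (Suc (Suc j)))"
    by (simp add: vs_rec)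
  also have "\<dots> \<longleftrightarrow> Q1 (vs q j) \<and> (\<forall>i\<in>{Suc j..Suc j+r}. Q1 (vs q i)) \<and> vs q (Suc j+r) = (0,1)"
    using Suc by simp
  also have "\<dots> \<longleftrightarrow> (\<forall>i\<in>{j..j+Suc r}. Q1 (vs q i)) \<and> vs q (j+Suc r) = (0,1)"
  proof -
    have "{j..j+Suc r} = insert j {Suc j..Suc j+r}" by auto
    then show ?thesis by auto
  qed
  finally show ?case .
qed

definition chk :: "int \<Rightarrow> int \<Rightarrow> int \<Rightarrow> int \<Rightarrow> nat \<Rightarrow> bool" where
  "chk a b c d m = wc (qf a b c d) (m - 1) 1 (vs (qf a b c d) 1) (vs (qf a b c d) 2)"

lemma chk_iff:
  assumes "m \<ge> 1"
  shows "chk a b c d m \<longleftrightarrow> (\<forall>i\<in>{1..m}. Q1 (vs (qf a b c d) i)) \<and> vs (qf a b c d) m = (0,1)"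
  using wc_correct[of "qf a b c d" "m-1" 1] assms by (simp add: chk_def numeral_2_eq_2)

definition good :: "(int \<times> int \<times> int \<times> int \<times> nat) list" where
  "good = [(1,1,1,1,3),(1,1,3,3,6),(1,2,4,2,6),(1,3,6,2,12),(1,4,5,2,12),(1,3,7,2,18),(1,5,5,2,18)]"

definition enumA :: "nat \<Rightarrow> nat \<Rightarrow> bool" where
  "enumA m S = list_all (\<lambda>a. list_all (\<lambda>d. list_all (\<lambda>b.
      if 2*a+2*d+b \<le> S \<and> a \<le> d then
        (chk (int a) (int b) (int (S-2*a-2*d-b)) (int d) m \<longrightarrow>
          (int a, int b, int (S-2*a-2*d-b), int d, m) \<in> set good)
      else True) [0..<S+1]) [0..<S+1]) [0..<S+1]"

definition enumB :: "nat \<Rightarrow> nat \<Rightarrow> bool" where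
  "enumB m T = list_all (\<lambda>a. list_all (\<lambda>d.
      if a+d \<le> T \<and> a \<le> d then
        (chk (int a) (int (T-a-d)) (int (T-a-d)) (int d) m \<longrightarrow>
          (int a, int (T-a-d), int (T-a-d), int d, m) \<in> set good)
      else True) [0..<T+1]) [0..<T+1]"

lemma enumB_ok: "enumB 3 3 \<and> enumB 9 7"
  by code_simp

lemma enumA_ok: "enumA 6 12" "enumA 12 15" "enumA 18 16" "enumA 36 17"
  by code_simp+

lemma good_chk: "chk 1 1 1 1 3" "chk 1 1 3 3 6" "chk 1 2 4 2 6" "chk 1 3 6 2 12" "chk 1 4 5 2 12"
  "chk 1 3 7 2 18" "chk 1 5 5 2 18"
  by code_simp+



lemma vs_lc: "1 \<le> j \<Longrightarrow> lc 1 (vs q (j-1)) 1 (vs q (Suc j)) = sm (q j) (vs q j)"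
proof -
  assume "1 \<le> j"
  then obtain k where k: "j = Suc k" by (cases j) auto
  show ?thesis unfolding k by (simp add: vs_rec lc_def sm_def)
qed

lemma psum:
  fixes f :: "nat \<Rightarrow> int"
  assumes per: "\<And>j. f (j + 6) = f j"
  shows "(\<Sum>j=1..6*r+s. f j) = int r * (\<Sum>j=1..6. f j) + (\<Sum>j=1..s. f j)"
proof (induction r)
  case 0 then show ?case by simp
next
  case (Suc r)
  define N where "N = 6*r+s"
  have eq: "6 * Suc r + s = 6 + N" by (simp add: N_def)
  have "(\<Sum>j=1..6*Suc r+s. f j) = (\<Sum>j=1..6+N. f j)" by (simp only: eq)
  also have "\<dots> = (\<Sum>j=1..6. f j) + (\<Sum>j=6+1..6+N. f j)"
    by (rule sum.ub_add_nat) simp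
  also have "(\<Sum>j=6+1..6+N. f j) = (\<Sum>j=1..N. f j)"
  proof -
    have "(\<Sum>j=1+6..N+6. f j) = (\<Sum>j=1..N. f (j+6))" by (rule sum.shift_bounds_cl_nat_ivl)
    then show ?thesis using per by (simp add: add.commute)
  qed
  finally show ?case using Suc by (simp add: N_def algebra_simps)
qed

lemma six: "(k mod 6 = 0 \<and> Suc k mod 6 = 1 \<and> odd (Suc k)) \<or> (k mod 6 = 1 \<and> Suc k mod 6 = 2 \<and> even (Suc k))
  \<or> (k mod 6 = 2 \<and> Suc k mod 6 = 3 \<and> odd (Suc k)) \<or> (k mod 6 = 3 \<and> Suc k mod 6 = 4 \<and> even (Suc k))
  \<or> (k mod 6 = 4 \<and> Suc k mod 6 = 5 \<and> odd (Suc k)) \<or> (k mod 6 = 5 \<and> Suc k mod 6 = 0 \<and> even (Suc k))"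
  by presburger

definition qg :: "int \<Rightarrow> int \<Rightarrow> int \<Rightarrow> int \<Rightarrow> nat \<Rightarrow> int" where
  "qg a b c d k = (if k mod 6 = 0 then a else if k mod 6 = 1 then c else if k mod 6 = 2 then a
     else if k mod 6 = 3 then d else if k mod 6 = 4 then b else d)"

lemma qf_per: "qf a b c d (j+6) = qf a b c d j" by (simp add: qf_def)
lemma qg_per: "qg a b c d (j+6) = qg a b c d j" by (simp add: qg_def)

lemma set16: "{1..6::nat} = {1,2,3,4,5,6}" by auto
lemma set13: "{1..3::nat} = {1,2,3}" by auto

lemma qf_sum6: "(\<Sum>j=1..6. qf a b c d j) = 2*a+2*d+b+c"
  unfolding set16 qf_def by simp
lemma qg_sum6: "(\<Sum>j=1..6. qg a b c d j) = 2*a+2*d+b+c"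
  unfolding set16 qg_def by simp
lemma qf_sum3: "(\<Sum>j=1..3. qf a b c d j) = a+d+b"
  unfolding set13 qf_def by simp
lemma qg_sum3: "(\<Sum>j=1..3. qg a b c d j) = c+a+d"
  unfolding set13 qg_def by simp

lemma enumA_use:
  fixes a b c d :: nat
  assumes "enumA m S" "2*a+2*d+b+c = S" "a \<le> d" "chk (int a) (int b) (int c) (int d) m"
  shows "(int a, int b, int c, int d, m) \<in> set good"
proof -
  have ab: "a \<in> set [0..<S+1]" "d \<in> set [0..<S+1]" "b \<in> set [0..<S+1]" using assms(2) by auto
  have cS: "S-2*a-2*d-b = c" using assms(2) by simp
  have H: "\<forall>a\<in>set [0..<S+1]. \<forall>d\<in>set [0..<S+1]. \<forall>b\<in>set [0..<S+1].
      if 2*a+2*d+b \<le> S \<and> a \<le> d then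
        (chk (int a) (int b) (int (S-2*a-2*d-b)) (int d) m \<longrightarrow>
          (int a, int b, int (S-2*a-2*d-b), int d, m) \<in> set good)
      else True" using assms(1) unfolding enumA_def list_all_iff .
  have I: "if 2*a+2*d+b \<le> S \<and> a \<le> d then
        (chk (int a) (int b) (int (S-2*a-2*d-b)) (int d) m \<longrightarrow>
          (int a, int b, int (S-2*a-2*d-b), int d, m) \<in> set good)
      else True" using bspec[OF bspec[OF bspec[OF H ab(1)] ab(2)] ab(3)] .
  have c1: "2*a+2*d+b \<le> S \<and> a \<le> d" using assms(2,3) by simp
  show ?thesis using I c1 assms(4) unfolding cS by simp
qed

lemma enumB_use:
  fixes a b c d :: nat
  assumes "enumB m T" "a+b+d = T" "b = c" "a \<le> d" "chk (int a) (int b) (int c) (int d) m"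
  shows "(int a, int b, int c, int d, m) \<in> set good"
proof -
  have ab: "a \<in> set [0..<T+1]" "d \<in> set [0..<T+1]" using assms(2) by auto
  have cT: "T-a-d = b" using assms(2) by simp
  have H: "\<forall>a\<in>set [0..<T+1]. \<forall>d\<in>set [0..<T+1].
      if a+d \<le> T \<and> a \<le> d then
        (chk (int a) (int (T-a-d)) (int (T-a-d)) (int d) m \<longrightarrow>
          (int a, int (T-a-d), int (T-a-d), int d, m) \<in> set good)
      else True" using assms(1) unfolding enumB_def list_all_iff .
  have I: "if a+d \<le> T \<and> a \<le> d then
        (chk (int a) (int (T-a-d)) (int (T-a-d)) (int d) m \<longrightarrow>
          (int a, int (T-a-d), int (T-a-d), int d, m) \<in> set good)
      else True" using bspec[OF bspec[OF H ab(1)] ab(2)] .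
  have c1: "a+d \<le> T \<and> a \<le> d" using assms(2,4) by simp
  show ?thesis using I c1 assms(5) assms(3) unfolding cT by simp
qed

lemma arith_main:
  fixes a b c d m :: nat
  assumes "3 dvd m" "m \<ge> 2" "a \<le> d"
    "(\<Sum>j=1..m. qf (int a) (int b) (int c) (int d) j) = 3*int m - 6"
    "(\<Sum>j=1..m. qg (int a) (int b) (int c) (int d) j) = 3*int m - 6"
    "chk (int a) (int b) (int c) (int d) m"
  shows "(int a, int b, int c, int d, m) \<in> set good"
proof -
  define S where "S = 2*a+2*d+b+c"
  have "m = 6*(m div 6) \<or> m = 6*(m div 6)+3" using assms(1) by presburger
  then obtain r where "m = 6*r \<or> m = 6*r+3" by blast
  then show ?thesis
  proof
    assume m: "m = 6*r"
    have "int r * int S = 18 * int r - 6"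
      using assms(4) psum[of "qf (int a) (int b) (int c) (int d)" r 0] qf_per qf_sum6
      by (simp add: m S_def)
    then have e: "int r * (18 - int S) = 6" by (simp add: algebra_simps)
    have "int r > 0" using assms(2) m by simp
    then have "18 - int S > 0" using e
      by (metis linorder_not_le mult_nonneg_nonpos of_nat_0_le_iff zero_less_numeral order_less_imp_le)
    then have "int r * 1 \<le> int r * (18 - int S)" by (intro mult_left_mono) auto
    then have "int r \<le> 6" using e by simp
    then have "r \<le> 6" by simp
    then consider "r = 1" | "r = 2" | "r = 3" | "r = 4" | "r = 5" | "r = 6" using \<open>int r > 0\<close> by linarith
    then show ?thesis
    proof cases
      case 1 then have "S = 12" using e by simp
      then show ?thesis using enumA_use[OF enumA_ok(1)] assms m 1 by (simp add: S_def)
    next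
      case 2 then have "S = 15" using e by simp
      then show ?thesis using enumA_use[OF enumA_ok(2)] assms m 2 by (simp add: S_def)
    next
      case 3 then have "S = 16" using e by simp
      then show ?thesis using enumA_use[OF enumA_ok(3)] assms m 3 by (simp add: S_def)
    next
      case 4 then have "4 * (18 - int S) = 6" using e by simp
      then have False by presburger
      then show ?thesis ..
    next
      case 5 then have "5 * (18 - int S) = 6" using e by simp
      then have False by presburger
      then show ?thesis ..
    next
      case 6 then have "S = 17" using e by simp
      then show ?thesis using enumA_use[OF enumA_ok(4)] assms m 6 by (simp add: S_def)
    qed
  next
    assume m: "m = 6*r+3"
    have e1: "int r * int S + (int a + int d + int b) = 18 * int r + 3"
      using assms(4) psum[of "qf (int a) (int b) (int c) (int d)" r 3] qf_per qf_sum6 qf_sum3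
      by (simp add: m S_def)
    have e2: "int r * int S + (int c + int a + int d) = 18 * int r + 3"
      using assms(5) psum[of "qg (int a) (int b) (int c) (int d)" r 3] qg_per qg_sum6 qg_sum3
      by (simp add: m S_def)
    have bc: "b = c" using e1 e2 by simp
    define T where "T = a + b + d"
    have e: "(2 * int r + 1) * int T = 18 * int r + 3"
      using e1 bc by (simp add: S_def T_def algebra_simps)
    have "int T < 9"
    proof (rule ccontr)
      assume "\<not> int T < 9"
      then have "(2 * int r + 1) * int T \<ge> (2 * int r + 1) * 9" by (intro mult_left_mono) auto
      then show False using e by simp
    qed
    then have e': "(2 * int r + 1) * (9 - int T) = 6" using e by (simp add: algebra_simps)
    have "2 * int r + 1 \<le> 6"
    proof -
      have "9 - int T \<ge> 1" using \<open>int T < 9\<close> by simp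
      then have "(2 * int r + 1) * 1 \<le> (2 * int r + 1) * (9 - int T)" by (intro mult_left_mono) auto
      then show ?thesis using e' by simp
    qed
    then consider "r = 0" | "r = 1" | "r = 2" by linarith
    then show ?thesis
    proof cases
      case 1 then have "T = 3" using e by simp
      then show ?thesis using enumB_use[OF enumB_ok[THEN conjunct1]] assms m 1 bc by (simp add: T_def)
    next
      case 2 then have "T = 7" using e by simp
      then show ?thesis using enumB_use[OF enumB_ok[THEN conjunct2]] assms m 2 bc by (simp add: T_def)
    next
      case 3 then have "5 * (9 - int T) = 6" using e' by simp
      then have False by presburger
      then show ?thesis ..
    qed
  qed
qed



lemma cyc3:
  fixes f :: "'a \<Rightarrow> 'a"
  assumes "f x = y" "f y = z" "f z = x" "x \<noteq> y" "x \<noteq> z" "(f^^n) x = x"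
  shows "3 dvd n"
proof -
  have "(f^^n) x = (if n mod 3 = 0 then x else if n mod 3 = 1 then y else z)" for n
  proof (induction n)
    case 0 then show ?case by simp
  next
    case (Suc n)
    have "n mod 3 = 0 \<and> Suc n mod 3 = 1 \<or> n mod 3 = 1 \<and> Suc n mod 3 = 2 \<or> n mod 3 = 2 \<and> Suc n mod 3 = 0"
      by presburger
    then show ?case using Suc assms(1-3) by auto
  qed
  then show ?thesis using assms(4-6) by (metis dvd_eq_mod_eq_0)
qed

context
  fixes A :: "'a set" and rho :: "nat \<Rightarrow> 'a \<Rightarrow> 'a" and C :: "'a \<Rightarrow> nat \<Rightarrow> nat \<Rightarrow> int"
    and R :: "'a \<Rightarrow> (nat \<Rightarrow> int) set"
  assumes rs: "root_system {1::nat,2} A rho C R"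
begin

lemma nvec_iff: "a \<in> A \<Longrightarrow> v \<in> R a \<Longrightarrow> v \<in> nvec {1,2} \<longleftrightarrow> Q1 (P v)"
proof -
  assume a: "a \<in> A" and v: "v \<in> R a"
  have z: "v \<in> zvec {1,2}" using R_zvec[OF rs a] v by auto
  have "P v \<noteq> (0,0)" using ax_P1[OF rs a, of 0] v by force
  then show ?thesis using z by (auto simp: nvec_def Q1_def P_def)
qed

lemma card_pos: "a \<in> A \<Longrightarrow> card (pos_roots {1,2} (R a)) = card {u \<in> P ` R a. Q1 u}"
proof -
  assume a: "a \<in> A"
  have "P ` pos_roots {1,2} (R a) = {u \<in> P ` R a. Q1 u}"
    using nvec_iff[OF a] by (auto simp: pos_roots_def)
  moreover have "inj_on P (pos_roots {1,2} (R a))"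
    using P_inj[OF rs a] by (rule inj_on_subset) (auto simp: pos_roots_def)
  ultimately show ?thesis by (metis card_image)
qed

lemma span2_eq: "a \<in> A \<Longrightarrow> R a \<inter> span2 1 2 = pos_roots {1,2} (R a)"
proof -
  assume a: "a \<in> A"
  have "v \<in> span2 1 2 \<longleftrightarrow> v \<in> nvec {1,2}" if v: "v \<in> R a" for v
  proof
    assume "v \<in> span2 1 2"
    then obtain s t where "0 \<le> s" "0 \<le> t" "v = (\<lambda>k. s * alpha 1 k + t * alpha 2 k)"
      by (auto simp: span2_def)
    then show "v \<in> nvec {1,2}" by (auto simp: nvec_def zvec_def alpha_def)
  next
    assume n: "v \<in> nvec {1,2}"
    then have "v \<in> zvec {1,2}" by (simp add: nvec_def)
    then have "v = (\<lambda>k. v 1 * alpha 1 k + v 2 * alpha 2 k)" by (rule zvec_eq[OF rs])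
    moreover have "0 \<le> v 1" "0 \<le> v 2" using n by (auto simp: nvec_def)
    ultimately show "v \<in> span2 1 2" unfolding span2_def by blast
  qed
  then show ?thesis by (auto simp: pos_roots_def)
qed

end

lemma swap_Q1: "{u \<in> Ps ` S. Q1 u} = prod.swap ` {u \<in> P ` S. Q1 u}"
  by (auto simp: Ps_def P_def Q1_def image_iff)

theorem theorem6p1:
  fixes x y z :: 'a
    and rho :: "nat \<Rightarrow> 'a \<Rightarrow> 'a"
    and C :: "'a \<Rightarrow> nat \<Rightarrow> nat \<Rightarrow> int"
    and R :: "'a \<Rightarrow> (nat \<Rightarrow> int) set"
    and a b c d :: nat
  assumes dist: "x \<noteq> y" "y \<noteq> z" "x \<noteq> z"
    and cs: "cartan_scheme {1, 2} {x, y, z} rho C"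
    and rho1: "rho 1 x = y" "rho 1 y = x" "rho 1 z = z"
    and rho2: "rho 2 x = x" "rho 2 y = z" "rho 2 z = y"
    and ad: "a \<le> d"
    and Cx: "C x 1 1 = 2" "C x 1 2 = - int a" "C x 2 1 = - int c" "C x 2 2 = 2"
    and Cy: "C y 1 1 = 2" "C y 1 2 = - int a" "C y 2 1 = - int d" "C y 2 2 = 2"
    and Cz: "C z 1 1 = 2" "C z 1 2 = - int b" "C z 2 1 = - int d" "C z 2 2 = 2"
    and rs: "root_system {1, 2} {x, y, z} rho C R"
  shows "(finite_root_system {x, y, z} R \<longrightarrow>
            ((a, b, c, d) = (1, 1, 1, 1) \<and> card (pos_roots {1, 2} (R x)) = 3)
          \<or> ((a, b, c, d) = (1, 1, 3, 3) \<and> card (pos_roots {1, 2} (R x)) = 6)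
          \<or> ((a, b, c, d) = (1, 2, 4, 2) \<and> card (pos_roots {1, 2} (R x)) = 6)
          \<or> ((a, b, c, d) = (1, 3, 6, 2) \<and> card (pos_roots {1, 2} (R x)) = 12)
          \<or> ((a, b, c, d) = (1, 4, 5, 2) \<and> card (pos_roots {1, 2} (R x)) = 12)
          \<or> ((a, b, c, d) = (1, 3, 7, 2) \<and> card (pos_roots {1, 2} (R x)) = 18)
          \<or> ((a, b, c, d) = (1, 5, 5, 2) \<and> card (pos_roots {1, 2} (R x)) = 18))
       \<and> ((a, b, c, d) \<in> {(1, 1, 1, 1), (1, 1, 3, 3), (1, 2, 4, 2), (1, 3, 6, 2),
                          (1, 4, 5, 2), (1, 3, 7, 2), (1, 5, 5, 2)}
          \<longrightarrow> finite_root_system {x, y, z} R)"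
proof -
  define ob1 where "ob1 k = (if k mod 6 = 0 then x else if k mod 6 = 1 then y else if k mod 6 = 2 then z
     else if k mod 6 = 3 then z else if k mod 6 = 4 then y else x)" for k :: nat
  define ix1 where "ix1 k = (if odd k then 1 else 2::nat)" for k :: nat
  define q1 where "q1 = qf (int a) (int b) (int c) (int d)"
  define ob2 where "ob2 k = (if k mod 6 = 0 then x else if k mod 6 = 1 then x else if k mod 6 = 2 then y
     else if k mod 6 = 3 then z else if k mod 6 = 4 then z else y)" for k :: nat
  define ix2 where "ix2 k = (if odd k then 2 else 1::nat)" for k :: nat
  define q2 where "q2 = qg (int a) (int b) (int c) (int d)"
  have W1: "walk (\<lambda>k. P ` R (ob1 k)) q1"
  proof (rule walk_gen[OF rs, of P ob1 ix1])
    show "P = P \<or> P = Ps" by simp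
    show "ob1 k \<in> {x,y,z}" for k by (simp add: ob1_def)
    show "ix1 k \<in> {1,2}" for k by (simp add: ix1_def)
    show "rho (ix1 (Suc k)) (ob1 k) = ob1 (Suc k)" for k
      using six[of k] rho1 rho2 by (auto simp: ob1_def ix1_def)
    show "P (sigma {1,2} C (ix1 (Suc k)) (ob1 k) v) = app (Fm (Suc k) (q1 (Suc k))) (P v)" for k v
    proof -
      consider "k mod 6 = 0" "Suc k mod 6 = 1" "odd (Suc k)" | "k mod 6 = 1" "Suc k mod 6 = 2" "even (Suc k)" | "k mod 6 = 2" "Suc k mod 6 = 3" "odd (Suc k)" | "k mod 6 = 3" "Suc k mod 6 = 4" "even (Suc k)" | "k mod 6 = 4" "Suc k mod 6 = 5" "odd (Suc k)" | "k mod 6 = 5" "Suc k mod 6 = 0" "even (Suc k)" using six[of k] by meson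
      then show ?thesis
      proof cases
        case 1
        then have e: "ob1 k = x" "ix1 (Suc k) = 1" "q1 (Suc k) = int a" by (simp_all add: ob1_def ix1_def q1_def qf_def Cx Cy Cz)
        show ?thesis unfolding e using P_sigma1[where C=C and a=x, OF Cx(1) 1(3), unfolded Cx(2) minus_minus] .
      next
        case 2
        then have e: "ob1 k = y" "ix1 (Suc k) = 2" "q1 (Suc k) = int d" by (simp_all add: ob1_def ix1_def q1_def qf_def Cx Cy Cz)
        show ?thesis unfolding e using P_sigma2[where C=C and a=y, OF Cy(4) 2(3), unfolded Cy(3) minus_minus] .
      next
        case 3
        then have e: "ob1 k = z" "ix1 (Suc k) = 1" "q1 (Suc k) = int b" by (simp_all add: ob1_def ix1_def q1_def qf_def Cx Cy Cz)
        show ?thesis unfolding e using P_sigma1[where C=C and a=z, OF Cz(1) 3(3), unfolded Cz(2) minus_minus] .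
      next
        case 4
        then have e: "ob1 k = z" "ix1 (Suc k) = 2" "q1 (Suc k) = int d" by (simp_all add: ob1_def ix1_def q1_def qf_def Cx Cy Cz)
        show ?thesis unfolding e using P_sigma2[where C=C and a=z, OF Cz(4) 4(3), unfolded Cz(3) minus_minus] .
      next
        case 5
        then have e: "ob1 k = y" "ix1 (Suc k) = 1" "q1 (Suc k) = int a" by (simp_all add: ob1_def ix1_def q1_def qf_def Cx Cy Cz)
        show ?thesis unfolding e using P_sigma1[where C=C and a=y, OF Cy(1) 5(3), unfolded Cy(2) minus_minus] .
      next
        case 6
        then have e: "ob1 k = x" "ix1 (Suc k) = 2" "q1 (Suc k) = int c" by (simp_all add: ob1_def ix1_def q1_def qf_def Cx Cy Cz)
        show ?thesis unfolding e using P_sigma2[where C=C and a=x, OF Cx(4) 6(3), unfolded Cx(3) minus_minus] .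
      qed
    qed
  qed
  have W2: "walk (\<lambda>k. Ps ` R (ob2 k)) q2"
  proof (rule walk_gen[OF rs, of Ps ob2 ix2])
    show "Ps = P \<or> Ps = Ps" by simp
    show "ob2 k \<in> {x,y,z}" for k by (simp add: ob2_def)
    show "ix2 k \<in> {1,2}" for k by (simp add: ix2_def)
    show "rho (ix2 (Suc k)) (ob2 k) = ob2 (Suc k)" for k
      using six[of k] rho1 rho2 by (auto simp: ob2_def ix2_def)
    show "Ps (sigma {1,2} C (ix2 (Suc k)) (ob2 k) v) = app (Fm (Suc k) (q2 (Suc k))) (Ps v)" for k v
    proof -
      consider "k mod 6 = 0" "Suc k mod 6 = 1" "odd (Suc k)" | "k mod 6 = 1" "Suc k mod 6 = 2" "even (Suc k)" | "k mod 6 = 2" "Suc k mod 6 = 3" "odd (Suc k)" | "k mod 6 = 3" "Suc k mod 6 = 4" "even (Suc k)" | "k mod 6 = 4" "Suc k mod 6 = 5" "odd (Suc k)" | "k mod 6 = 5" "Suc k mod 6 = 0" "even (Suc k)" using six[of k] by meson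
      then show ?thesis
      proof cases
        case 1
        then have e: "ob2 k = x" "ix2 (Suc k) = 2" "q2 (Suc k) = int c" by (simp_all add: ob2_def ix2_def q2_def qg_def Cx Cy Cz)
        show ?thesis unfolding e using Ps_sigma2[where C=C and a=x, OF Cx(4) 1(3), unfolded Cx(3) minus_minus] .
      next
        case 2
        then have e: "ob2 k = x" "ix2 (Suc k) = 1" "q2 (Suc k) = int a" by (simp_all add: ob2_def ix2_def q2_def qg_def Cx Cy Cz)
        show ?thesis unfolding e using Ps_sigma1[where C=C and a=x, OF Cx(1) 2(3), unfolded Cx(2) minus_minus] .
      next
        case 3
        then have e: "ob2 k = y" "ix2 (Suc k) = 2" "q2 (Suc k) = int d" by (simp_all add: ob2_def ix2_def q2_def qg_def Cx Cy Cz)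
        show ?thesis unfolding e using Ps_sigma2[where C=C and a=y, OF Cy(4) 3(3), unfolded Cy(3) minus_minus] .
      next
        case 4
        then have e: "ob2 k = z" "ix2 (Suc k) = 1" "q2 (Suc k) = int b" by (simp_all add: ob2_def ix2_def q2_def qg_def Cx Cy Cz)
        show ?thesis unfolding e using Ps_sigma1[where C=C and a=z, OF Cz(1) 4(3), unfolded Cz(2) minus_minus] .
      next
        case 5
        then have e: "ob2 k = z" "ix2 (Suc k) = 2" "q2 (Suc k) = int d" by (simp_all add: ob2_def ix2_def q2_def qg_def Cx Cy Cz)
        show ?thesis unfolding e using Ps_sigma2[where C=C and a=z, OF Cz(4) 5(3), unfolded Cz(3) minus_minus] .
      next
        case 6
        then have e: "ob2 k = y" "ix2 (Suc k) = 1" "q2 (Suc k) = int a" by (simp_all add: ob2_def ix2_def q2_def qg_def Cx Cy Cz)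
        show ?thesis unfolding e using Ps_sigma1[where C=C and a=y, OF Cy(1) 6(3), unfolded Cy(2) minus_minus] .
      qed
    qed
  qed
  have o1: "ob1 0 = x" and o2: "ob2 0 = x" by (simp_all add: ob1_def ob2_def)
  have xA: "x \<in> {x,y,z}" by simp
  have finP: "finite (R x) \<longleftrightarrow> finite (P ` R x)"
    using P_inj[OF rs xA] finite_image_iff by blast
  have part1: "finite_root_system {x, y, z} R \<longrightarrow>
            ((a, b, c, d) = (1, 1, 1, 1) \<and> card (pos_roots {1, 2} (R x)) = 3)
          \<or> ((a, b, c, d) = (1, 1, 3, 3) \<and> card (pos_roots {1, 2} (R x)) = 6)
          \<or> ((a, b, c, d) = (1, 2, 4, 2) \<and> card (pos_roots {1, 2} (R x)) = 6)
          \<or> ((a, b, c, d) = (1, 3, 6, 2) \<and> card (pos_roots {1, 2} (R x)) = 12)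
          \<or> ((a, b, c, d) = (1, 4, 5, 2) \<and> card (pos_roots {1, 2} (R x)) = 12)
          \<or> ((a, b, c, d) = (1, 3, 7, 2) \<and> card (pos_roots {1, 2} (R x)) = 18)
          \<or> ((a, b, c, d) = (1, 5, 5, 2) \<and> card (pos_roots {1, 2} (R x)) = 18)"
  proof
    assume "finite_root_system {x, y, z} R"
    then have fx: "finite (R x)" by (simp add: finite_root_system_def)
    then have f1: "finite (P ` R (ob1 0))" using finP o1 by simp
    obtain m where m: "2 \<le> m" "\<forall>j\<in>{1..m}. Q1 (vs q1 j)" "vs q1 m = (0,1)" "vs q1 (Suc m) = (-1,0)"
      using walk.exit_lemma[OF W1 f1] by blast
    have cm: "card {u \<in> P ` R x. Q1 u} = m"
      using walk.pos_char(2)[OF W1, of m] m o1 by simp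
    have f2: "finite (Ps ` R (ob2 0))" using fx o2 by simp
    obtain m2 where m2: "2 \<le> m2" "\<forall>j\<in>{1..m2}. Q1 (vs q2 j)" "vs q2 m2 = (0,1)" "vs q2 (Suc m2) = (-1,0)"
      using walk.exit_lemma[OF W2 f2] by blast
    have cm2: "card {u \<in> Ps ` R x. Q1 u} = m2"
      using walk.pos_char(2)[OF W2, of m2] m2 o2 by simp
    have "card {u \<in> Ps ` R x. Q1 u} = card {u \<in> P ` R x. Q1 u}"
      unfolding swap_Q1 by (rule card_image) (simp add: swap_inj_on)
    then have mm: "m2 = m" using cm cm2 by simp
    have cp: "card (pos_roots {1,2} (R x)) = m" using card_pos[OF rs xA] cm by simp
    have "finite (R x \<inter> span2 1 2)" using fx by simp
    then have "((rho 1 \<circ> rho 2) ^^ card (R x \<inter> span2 1 2)) x = x"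
      using rs unfolding root_system_def by force
    then have "((rho 1 \<circ> rho 2) ^^ m) x = x" using span2_eq[OF rs xA] cp by simp
    then have d3: "3 dvd m" using cyc3[of "rho 1 \<circ> rho 2" x y z m] rho1 rho2 dist by simp
    have s1: "(\<Sum>j=1..m. q1 j) = 3 * int m - 6"
      by (rule quid[of m "vs q1"]) (use m det_v vs_lc vs_0 in auto)
    have s2: "(\<Sum>j=1..m. q2 j) = 3 * int m - 6"
      by (rule quid[of m "vs q2"]) (use m2 mm det_v vs_lc vs_0 in auto)
    have ck: "chk (int a) (int b) (int c) (int d) m"
      using chk_iff[of m] m by (simp add: q1_def)
    have "(int a, int b, int c, int d, m) \<in> set good"
      using arith_main[OF d3 m(1) ad] s1 s2 ck by (simp add: q1_def q2_def)
    then show "((a, b, c, d) = (1, 1, 1, 1) \<and> card (pos_roots {1, 2} (R x)) = 3)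
          \<or> ((a, b, c, d) = (1, 1, 3, 3) \<and> card (pos_roots {1, 2} (R x)) = 6)
          \<or> ((a, b, c, d) = (1, 2, 4, 2) \<and> card (pos_roots {1, 2} (R x)) = 6)
          \<or> ((a, b, c, d) = (1, 3, 6, 2) \<and> card (pos_roots {1, 2} (R x)) = 12)
          \<or> ((a, b, c, d) = (1, 4, 5, 2) \<and> card (pos_roots {1, 2} (R x)) = 12)
          \<or> ((a, b, c, d) = (1, 3, 7, 2) \<and> card (pos_roots {1, 2} (R x)) = 18)
          \<or> ((a, b, c, d) = (1, 5, 5, 2) \<and> card (pos_roots {1, 2} (R x)) = 18)"
      using cp by (auto simp: good_def)
  qed
  have part2: "(a, b, c, d) \<in> {(1, 1, 1, 1), (1, 1, 3, 3), (1, 2, 4, 2), (1, 3, 6, 2),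
                          (1, 4, 5, 2), (1, 3, 7, 2), (1, 5, 5, 2)}
          \<longrightarrow> finite_root_system {x, y, z} R"
  proof
    assume mem: "(a, b, c, d) \<in> {(1, 1, 1, 1), (1, 1, 3, 3), (1, 2, 4, 2), (1, 3, 6, 2),
                          (1, 4, 5, 2), (1, 3, 7, 2), (1, 5, 5, 2)}"
    have "\<exists>m\<ge>1. chk (int a) (int b) (int c) (int d) m"
    proof -
      consider "(a, b, c, d) = (1, 1, 1, 1)" | "(a, b, c, d) = (1, 1, 3, 3)" | "(a, b, c, d) = (1, 2, 4, 2)" | "(a, b, c, d) = (1, 3, 6, 2)" | "(a, b, c, d) = (1, 4, 5, 2)" | "(a, b, c, d) = (1, 3, 7, 2)" | "(a, b, c, d) = (1, 5, 5, 2)" using mem by (elim insertE emptyE; blast)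
      then show ?thesis
      proof cases
        case 1 then show ?thesis using good_chk(1) by (intro exI[of _ 3]) simp
      next
        case 2 then show ?thesis using good_chk(2) by (intro exI[of _ 6]) simp
      next
        case 3 then show ?thesis using good_chk(3) by (intro exI[of _ 6]) simp
      next
        case 4 then show ?thesis using good_chk(4) by (intro exI[of _ 12]) simp
      next
        case 5 then show ?thesis using good_chk(5) by (intro exI[of _ 12]) simp
      next
        case 6 then show ?thesis using good_chk(6) by (intro exI[of _ 18]) simp
      next
        case 7 then show ?thesis using good_chk(7) by (intro exI[of _ 18]) simp
      qed
    qed
    then obtain m where m: "m \<ge> 1" "chk (int a) (int b) (int c) (int d) m" by blast
    then have "(\<forall>i\<in>{1..m}. Q1 (vs q1 i)) \<and> vs q1 m = (0,1)" using chk_iff by (simp add: q1_def)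
    then have "finite (P ` R (ob1 0))" using walk.finite_V0[OF W1 m(1)] by simp
    then have fx: "finite (R x)" using finP o1 by simp
    have "R y = sigma {1,2} C 1 x ` R x" using R_R3[OF rs xA, of 1] rho1 by simp
    then have fy: "finite (R y)" using fx by simp
    have "R z = sigma {1,2} C 2 y ` R y" using R_R3[OF rs, of y 2] rho2 by simp
    then have fz: "finite (R z)" using fy by simp
    show "finite_root_system {x, y, z} R" using fx fy fz by (simp add: finite_root_system_def)
  qed
  show ?thesis using part1 part2 by blast
qed


end
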